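(* Let $P$ be a shrub on a finite set $I$ with at least two elements. Then $P$ has a leaf or two distinct correlated vertices.
   Context: A shrub $P$ on a finite set $I$ is a set $E$ of edges (unordered pairs $\{i,j\}$ of distinct elements of $I$) together with a height function $h_P:I\to\mathbb{N}$. Say that $j$ covers $i$ if $\{i,j\}\in E$ and $h_P(j)=h_P(i)+1$. The axioms are: (1) if $\{i,j\}\in E$ then $h_P(i)=h_P(j)\pm 1$; (2) if $h_P(j)>0$ then there is an edge $\{i,j\}$ with $h_P(i)=h_P(j)-1$; (3) there are no four distinct vertices $a,b,c,d$ such that $a$ covers $b$ and $c$, $c$ covers $d$, and $\{b,d\}\notin E$; (4) there are no five distinct vertices $a,b,c,d,e$ such that $a$ covers $c$ and $d$, $b$ covers $d$ and $e$, $\{a,e\}\notin E$ and $\{b,c\}\notin E$. A leaf is a vertex that covers exactly one vertex and is covered by no vertex. Two vertices $i,j$ are correlated if the set of vertices covering $i$ equals the set of vertices covering $j$, and the set of vertices covered by $i$ equals the set of vertices covered by $j$. *)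

theory Defs
  imports Main
begin

text \<open>A shrub on a finite set I: an edge set E of unordered pairs of distinct
elements of I, and a height function h (only its values on I matter).\<close>

definition covers :: "'a set set \<Rightarrow> ('a \<Rightarrow> nat) \<Rightarrow> 'a \<Rightarrow> 'a \<Rightarrow> bool" where
  "covers E h j i \<longleftrightarrow> {i, j} \<in> E \<and> h j = h i + 1"

definition shrub :: "'a set \<Rightarrow> 'a set set \<Rightarrow> ('a \<Rightarrow> nat) \<Rightarrow> bool" where
  "shrub I E h \<longleftrightarrow>
     finite I \<and>
     (\<forall>e\<in>E. \<exists>i j. e = {i, j} \<and> i \<noteq> j \<and> i \<in> I \<and> j \<in> I) \<and>
     (\<forall>i\<in>I. \<forall>j\<in>I. {i, j} \<in> E \<longrightarrow> h i = h j + 1 \<or> h j = h i + 1) \<and>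
     (\<forall>j\<in>I. h j > 0 \<longrightarrow> (\<exists>i\<in>I. {i, j} \<in> E \<and> h i + 1 = h j)) \<and>
     (\<not> (\<exists>a\<in>I. \<exists>b\<in>I. \<exists>c\<in>I. \<exists>d\<in>I. distinct [a, b, c, d] \<and>
          covers E h a b \<and> covers E h a c \<and> covers E h c d \<and> {b, d} \<notin> E)) \<and>
     (\<not> (\<exists>a\<in>I. \<exists>b\<in>I. \<exists>c\<in>I. \<exists>d\<in>I. \<exists>e\<in>I. distinct [a, b, c, d, e] \<and>
          covers E h a c \<and> covers E h a d \<and> covers E h b d \<and> covers E h b e \<and>
          {a, e} \<notin> E \<and> {b, c} \<notin> E))"

definition leaf :: "'a set \<Rightarrow> 'a set set \<Rightarrow> ('a \<Rightarrow> nat) \<Rightarrow> 'a \<Rightarrow> bool" where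
  "leaf I E h i \<longleftrightarrow> i \<in> I \<and> card {k \<in> I. covers E h i k} = 1 \<and>
     \<not> (\<exists>k\<in>I. covers E h k i)"

definition correlated :: "'a set \<Rightarrow> 'a set set \<Rightarrow> ('a \<Rightarrow> nat) \<Rightarrow> 'a \<Rightarrow> 'a \<Rightarrow> bool" where
  "correlated I E h i j \<longleftrightarrow>
     {k \<in> I. covers E h k i} = {k \<in> I. covers E h k j} \<and>
     {k \<in> I. covers E h i k} = {k \<in> I. covers E h j k}"

end

theory Submission
  imports Defs
begin

theorem mainTheorem3:
  fixes I :: "'a set" and E :: "'a set set" and h :: "'a \<Rightarrow> nat"
  assumes "shrub I E h" and "card I \<ge> 2"
  shows "(\<exists>i. leaf I E h i) \<or>
         (\<exists>i\<in>I. \<exists>j\<in>I. i \<noteq> j \<and> correlated I E h i j)"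
proof -
  have fin: "finite I" using assms(1) unfolding shrub_def by blast
  have ax2: "\<And>j. j \<in> I \<Longrightarrow> h j > 0 \<Longrightarrow> \<exists>i\<in>I. {i, j} \<in> E \<and> h i + 1 = h j"
    using assms(1) unfolding shrub_def by blast
  have ax3: "\<And>a b c d. a \<in> I \<Longrightarrow> b \<in> I \<Longrightarrow> c \<in> I \<Longrightarrow> d \<in> I \<Longrightarrow> distinct [a, b, c, d] \<Longrightarrow>
          covers E h a b \<Longrightarrow> covers E h a c \<Longrightarrow> covers E h c d \<Longrightarrow> {b, d} \<in> E"
    using assms(1) unfolding shrub_def by blast
  have ax4: "\<And>a b c d e. a \<in> I \<Longrightarrow> b \<in> I \<Longrightarrow> c \<in> I \<Longrightarrow> d \<in> I \<Longrightarrow> e \<in> I \<Longrightarrow> distinct [a, b, c, d, e] \<Longrightarrow>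
          covers E h a c \<Longrightarrow> covers E h a d \<Longrightarrow> covers E h b d \<Longrightarrow> covers E h b e \<Longrightarrow>
          {a, e} \<notin> E \<Longrightarrow> {b, c} \<in> E"
    using assms(1) unfolding shrub_def by blast
  have cov: "\<And>x y. covers E h x y \<longleftrightarrow> {x, y} \<in> E \<and> h x = h y + 1"
    unfolding covers_def by (auto simp: insert_commute)
  define C where "C x = {k \<in> I. covers E h x k}" for x
  define U where "U x = {k \<in> I. covers E h k x}" for x
  have finC: "finite (C x)" for x using fin unfolding C_def by auto
  have Ine: "I \<noteq> {}" using assms(2) by auto
  define H where "H = Max (h ` I)"
  have hle: "\<And>x. x \<in> I \<Longrightarrow> h x \<le> H" unfolding H_def using fin by auto
  obtain m where m: "m \<in> I" "h m = H" unfolding H_def using fin Ine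
    by (metis (mono_tags, lifting) Max_in finite_imageI image_iff image_is_empty)
  show ?thesis
  proof (cases "H = 0")
    case True
    then have h0: "\<And>x. x \<in> I \<Longrightarrow> h x = 0" using hle by fastforce
    have nc: "\<And>x y. x \<in> I \<Longrightarrow> y \<in> I \<Longrightarrow> \<not> covers E h x y"
      using h0 unfolding covers_def by fastforce
    obtain x y where "x \<in> I" "y \<in> I" "x \<noteq> y" using assms(2) card_le_Suc0_iff_eq[OF fin] by force
    moreover have "correlated I E h x y" unfolding correlated_def using nc \<open>x \<in> I\<close> \<open>y \<in> I\<close> by blast
    ultimately show ?thesis by blast
  next
    case False
    define T where "T = {x \<in> I. h x = H}"
    have "m \<in> T" using m T_def by auto
    then obtain a where aT: "a \<in> T" and amin: "\<And>b. b \<in> T \<Longrightarrow> card (C a) \<le> card (C b)"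
      using ex_has_least_nat[of "\<lambda>x. x \<in> T" m "\<lambda>x. card (C x)"] by blast
    have aI: "a \<in> I" and ha: "h a = H" using aT T_def by auto
    have noabove: "\<not> covers E h k a" if "k \<in> I" for k
      using hle[OF that] ha unfolding covers_def by auto
    obtain i where i: "i \<in> I" "{i, a} \<in> E" "h i + 1 = h a" using ax2[OF aI] ha False by auto
    have "i \<in> C a" using i unfolding C_def cov by (auto simp: insert_commute)
    then have Cne: "C a \<noteq> {}" by auto
    show ?thesis
    proof (cases "card (C a) = 1")
      case True
      then have "leaf I E h a" unfolding leaf_def C_def using aI noabove by auto
      then show ?thesis by blast
    next
      case False
      then have "card (C a) \<ge> 2" using Cne finC[of a]
        by (metis One_nat_def Suc_1 Suc_leI card_gt_0_iff le_neq_implies_less not_less_eq_eq)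
      then obtain x y where xy: "x \<in> C a" "y \<in> C a" "x \<noteq> y"
        using card_le_Suc0_iff_eq[OF finC[of a]] by force
      have Csub: "C x \<subseteq> C y" if "x \<in> C a" "y \<in> C a" for x y
      proof
        fix d assume d: "d \<in> C x"
        show "d \<in> C y"
        proof (cases "x = y")
          case True then show ?thesis using d by simp
        next
          case False
          have hx: "h a = h x + 1" "h a = h y + 1" "h x = h d + 1" "x \<in> I" "y \<in> I" "d \<in> I"
            using that d unfolding C_def covers_def by auto
          have "{y, d} \<in> E"
            by (rule ax3[of a y x d]) (use that d hx False aI in \<open>auto simp: C_def\<close>)
          then show ?thesis using hx unfolding C_def cov by auto
        qed
      qed
      have Usub: "U x \<subseteq> U y" if "x \<in> C a" "y \<in> C a" for x y
      proof
        fix b assume b: "b \<in> U x"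
        have hx: "h a = h x + 1" "h a = h y + 1" "h b = h x + 1" "x \<in> I" "y \<in> I" "b \<in> I"
          "covers E h a x" "covers E h a y" "covers E h b x"
          using that b unfolding C_def U_def covers_def by auto
        have "covers E h b y"
        proof (rule ccontr)
          assume nby: "\<not> covers E h b y"
          have "b \<in> T" using hx ha T_def by auto
          then have cle: "card (C a) \<le> card (C b)" by (rule amin)
          have bna: "b \<noteq> a" using nby hx by auto
          have "\<not> C b \<subseteq> C a"
          proof
            assume "C b \<subseteq> C a"
            moreover have "y \<in> C a - C b" using that nby unfolding C_def by auto
            ultimately have "C b \<subset> C a" by auto
            then have "card (C b) < card (C a)" using finC by (rule psubset_card_mono[rotated])
            then show False using cle by simp
          qed
          then obtain e where e: "e \<in> C b" "e \<notin> C a" by auto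
          have he: "e \<in> I" "covers E h b e" "h b = h e + 1" using e unfolding C_def covers_def by auto
          have "{a, e} \<notin> E" using e he hx ha unfolding C_def cov by auto
          moreover have "distinct [a, b, y, x, e]"
            using e he hx ha bna nby unfolding C_def by auto
          ultimately have "{b, y} \<in> E"
            using ax4[of a b y x e] hx he e that bna nby aI
            unfolding C_def by auto
          then show False using nby hx unfolding cov by auto
        qed
        then show "b \<in> U y" using hx unfolding U_def by auto
      qed
      have "correlated I E h x y"
        unfolding correlated_def
        using Csub[OF xy(1,2)] Csub[OF xy(2,1)] Usub[OF xy(1,2)] Usub[OF xy(2,1)]
        unfolding C_def U_def by blast
      moreover have "x \<in> I" "y \<in> I" using xy unfolding C_def by auto
      ultimately show ?thesis using xy(3) by blast
    qed
  qed
qed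

end
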